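(* Let $G$ be an irreducible complex reflection group acting on $V\cong\mathbb{C}^2$. If $z\in G$ is a nonidentity central element and $G$ contains no reflection of the same order as $z$, then $\ell(z)>\operatorname{codim}(z)$.
   Context: A reflection is an element of $GL(V)$ of finite order fixing a hyperplane pointwise; a complex reflection group is a finite subgroup of $GL(V)$ generated by reflections, irreducible if $V$ is an irreducible $G$-module. $\ell(g)$ is the minimal number of reflections in $G$ whose product is $g$ ($\ell(1)=0$), and $\operatorname{codim}(g)=2-\dim\{v\in V:gv=v\}$. *)

theory Defs
  imports "HOL-Analysis.Analysis"
begin

type_synonym cmat2 = "complex^2^2"

text \<open>Fixed space of g acting on V = complex^2.\<close>
definition fixspace :: "cmat2 \<Rightarrow> (complex^2) set" where
  "fixspace g = {v. g *v v = v}"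

text \<open>codim(g) = 2 - dim_C of the fixed space (complex dimension).\<close>
definition codim :: "cmat2 \<Rightarrow> nat" where
  "codim g = 2 - vec.dim (fixspace g)"

definition mpow :: "cmat2 \<Rightarrow> nat \<Rightarrow> cmat2" where
  "mpow g n = ((\<lambda>h. g ** h) ^^ n) (mat 1)"

definition has_finite_order :: "cmat2 \<Rightarrow> bool" where
  "has_finite_order g \<longleftrightarrow> (\<exists>n>0. mpow g n = mat 1)"

definition mat_order :: "cmat2 \<Rightarrow> nat" where
  "mat_order g = (LEAST n. n > 0 \<and> mpow g n = mat 1)"

text \<open>A reflection: invertible, finite order, fixes a hyperplane (complex line in C^2)
  pointwise, and is not the identity.\<close>
definition is_reflection :: "cmat2 \<Rightarrow> bool" where
  "is_reflection g \<longleftrightarrow> invertible g \<and> has_finite_order g \<and> g \<noteq> mat 1 \<and>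
     (\<exists>H. vec.subspace H \<and> vec.dim H = 1 \<and> (\<forall>v\<in>H. g *v v = v))"

text \<open>Submonoid generated by S (for a finite set of invertible matrices this is the group generated).\<close>
inductive_set gen_by :: "cmat2 set \<Rightarrow> cmat2 set" for S where
  one: "mat 1 \<in> gen_by S"
| step: "s \<in> S \<Longrightarrow> g \<in> gen_by S \<Longrightarrow> s ** g \<in> gen_by S"

definition is_mat_group :: "cmat2 set \<Rightarrow> bool" where
  "is_mat_group G \<longleftrightarrow> mat 1 \<in> G \<and> (\<forall>g\<in>G. invertible g \<and> matrix_inv g \<in> G) \<and>
     (\<forall>g\<in>G. \<forall>h\<in>G. g ** h \<in> G)"

definition complex_reflection_group :: "cmat2 set \<Rightarrow> bool" where
  "complex_reflection_group G \<longleftrightarrow> finite G \<and> is_mat_group G \<and>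
     G = gen_by {r\<in>G. is_reflection r}"

definition irreducible_mat_group :: "cmat2 set \<Rightarrow> bool" where
  "irreducible_mat_group G \<longleftrightarrow>
     (\<forall>W. vec.subspace W \<and> (\<forall>g\<in>G. \<forall>w\<in>W. g *v w \<in> W) \<longrightarrow> W = {0} \<or> W = UNIV)"

text \<open>Reflection length: minimal number of reflections of G whose product is g.\<close>
definition refl_length :: "cmat2 set \<Rightarrow> cmat2 \<Rightarrow> nat" where
  "refl_length G g = (LEAST n. \<exists>rs. length rs = n \<and> set rs \<subseteq> {r\<in>G. is_reflection r} \<and>
       foldr (**) rs (mat 1) = g)"

end

theory Submission
  imports Defs
begin

lemma two_span:
  fixes u w :: "complex^2"
  assumes "u \<noteq> 0" "w \<notin> vec.span {u}"
  shows "vec.span {u, w} = UNIV"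
proof -
  have i1: "vec.independent {u}" using assms(1) by (simp add: vec.independent_insert)
  have ind0: "vec.independent (insert w {u})" by (rule vec.independent_insertI[OF assms(2) i1])
  have ind: "vec.independent {u, w}" using ind0 by (simp add: insert_commute)
  have "u \<noteq> w" using assms vec.span_base by auto
  hence c: "card {u, w} = 2" by simp
  have "UNIV \<subseteq> vec.span {u,w}"
  proof (rule vec.card_ge_dim_independent[OF _ ind])
    have "vec.dim (UNIV::(complex^2) set) = 2" using vec_dim_card[where 'a=complex and 'n=2] by simp
    hence d: "vec.dim (UNIV::(complex^2) set) = card {u, w}" using c by simp
    show "vec.dim (UNIV::(complex^2) set) \<le> card {u, w}" using d by (rule eq_imp_le)
  qed auto
  thus ?thesis by auto
qed

lemma two_eq:
  fixes u w :: "complex^2" and A B :: cmat2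
  assumes "u \<noteq> 0" "w \<notin> vec.span {u}"
    and "A *v u = B *v u" "A *v w = B *v w"
  shows "A = B"
proof -
  have S: "vec.subspace {x. A *v x = B *v x}"
    unfolding vec.subspace_def
    by (auto simp: matrix_vector_right_distrib vector_scalar_commute)
  have "vec.span {u,w} \<subseteq> {x. A *v x = B *v x}"
    using assms by (intro vec.span_minimal S) auto
  hence "\<forall>x. A *v x = B *v x" using two_span[OF assms(1,2)] by auto
  thus ?thesis by (simp add: matrix_eq)
qed

lemma mpow_Suc: "mpow g (Suc n) = g ** mpow g n"
  by (simp add: mpow_def)

lemma mpow_eig:
  assumes "g *v x = c *s x"
  shows "mpow g n *v x = c ^ n *s x"
proof (induction n)
  case 0 then show ?case by (simp add: mpow_def)
next
  case (Suc n)
  have "mpow g (Suc n) *v x = g *v (mpow g n *v x)"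
    by (simp add: mpow_Suc matrix_vector_mul_assoc)
  also have "\<dots> = c ^ n *s (g *v x)" using Suc by (simp add: vector_scalar_commute)
  also have "\<dots> = c ^ Suc n *s x" using assms by (simp add: vector_smult_assoc mult.commute)
  finally show ?case .
qed

lemma gen_by_list:
  "g \<in> gen_by S \<Longrightarrow> \<exists>rs. set rs \<subseteq> S \<and> foldr (**) rs (mat 1) = g"
proof (induction rule: gen_by.induct)
  case one then show ?case by (intro exI[of _ "[]"]) auto
next
  case (step s g)
  then obtain rs where "set rs \<subseteq> S" "foldr (**) rs (mat 1) = g" by blast
  with step show ?case by (intro exI[of _ "s # rs"]) auto
qed

lemma refl_nonzero_fixed:
  assumes "is_reflection r"
  obtains v where "v \<noteq> 0" "r *v v = v"
proof -
  obtain H where H: "vec.subspace H" "vec.dim H = 1" "\<forall>v\<in>H. r *v v = v"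
    using assms unfolding is_reflection_def by blast
  have "\<not> H \<subseteq> {0}" using H(2) vec.dim_eq_0[of H] by auto
  then obtain v where "v \<in> H" "v \<noteq> 0" by auto
  thus ?thesis using H(3) that by auto
qed

lemma scal_eq_one:
  fixes v :: "complex^2"
  assumes "v \<noteq> 0" "c *s v = v"
  shows "c = 1"
proof (rule ccontr)
  assume "c \<noteq> 1"
  have "(c - 1) *s v = 0" using assms(2)
    by (simp add: vector_sub_rdistrib)
  hence "v = 0" using \<open>c \<noteq> 1\<close>
    by (metis eq_iff_diff_eq_0 vector_mul_eq_0)
  thus False using assms(1) by simp
qed

theorem mainTheorem9:
  fixes G :: "cmat2 set" and z :: cmat2
  assumes "complex_reflection_group G"
    and "irreducible_mat_group G"
    and "z \<in> G" and "z \<noteq> mat 1"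
    and "\<forall>g\<in>G. g ** z = z ** g"
    and "\<not> (\<exists>r\<in>G. is_reflection r \<and> mat_order r = mat_order z)"
  shows "refl_length G z > codim z"
proof -
  let ?R = "{r\<in>G. is_reflection r}"
  let ?P = "\<lambda>n. \<exists>rs. length rs = n \<and> set rs \<subseteq> ?R \<and> foldr (**) rs (mat 1) = z"
  have zg: "z \<in> gen_by ?R" using assms(1,3) unfolding complex_reflection_group_def by auto
  obtain rs0 where "set rs0 \<subseteq> ?R" "foldr (**) rs0 (mat 1) = z"
    using gen_by_list[OF zg] by blast
  hence ex: "?P (length rs0)" by blast
  have no: "\<not> ?P n" if "n \<le> 2" for n
  proof
    assume "?P n"
    then obtain rs where rs: "length rs = n" "set rs \<subseteq> ?R" "foldr (**) rs (mat 1) = z" by blast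
    consider "rs = []" | r where "rs = [r]" | r1 r2 where "rs = [r1, r2]"
    proof -
      show ?thesis
      proof (cases rs)
        case Nil then show ?thesis using that by simp
      next
        case (Cons a t) note at = this
        show ?thesis
        proof (cases t)
          case Nil then show ?thesis using at that by simp
        next
          case (Cons b t2)
          then show ?thesis using at that rs(1) \<open>n \<le> 2\<close> by (cases t2) auto
        qed
      qed
    qed
    then show False
    proof cases
      case 1 then show False using rs assms(4) by simp
    next
      case (2 r)
      then show False using rs assms(6) by auto
    next
      case (3 r1 r2)
      have r1: "r1 \<in> G" "is_reflection r1" and r2: "r2 \<in> G" "is_reflection r2"
        using rs(2) 3 by auto
      have zdef: "z = r1 ** r2" using rs(3) 3 by simp
      obtain v where v: "v \<noteq> 0" "r2 *v v = v" using refl_nonzero_fixed[OF r2(2)] by blast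
      obtain u where u: "u \<noteq> 0" "r1 *v u = u" using refl_nonzero_fixed[OF r1(2)] by blast
      have "r2 *v (z *v v) = z *v v"
        using assms(5) r2(1) v(2) by (metis matrix_vector_mul_assoc)
      have "z *v v \<in> vec.span {v}"
      proof (rule ccontr)
        assume "z *v v \<notin> vec.span {v}"
        hence "r2 = mat 1" using two_eq[OF v(1)] v(2) \<open>r2 *v (z *v v) = z *v v\<close> by auto
        thus False using r2(2) unfolding is_reflection_def by simp
      qed
      then obtain l where lam: "z *v v = l *s v" by (auto simp: vec.span_singleton)
      define E where "E = {x. z *v x = l *s x}"
      have "vec.subspace E" unfolding vec.subspace_def E_def
        by (auto simp: matrix_vector_right_distrib vector_scalar_commute vector_add_ldistrib
            vector_smult_assoc mult.commute)
      moreover have "\<forall>g\<in>G. \<forall>w\<in>E. g *v w \<in> E"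
      proof (intro ballI)
        fix g w assume "g \<in> G" "w \<in> E"
        have "z *v (g *v w) = g *v (z *v w)"
          using assms(5) \<open>g \<in> G\<close> by (metis matrix_vector_mul_assoc)
        thus "g *v w \<in> E" using \<open>w \<in> E\<close> unfolding E_def by (simp add: vector_scalar_commute)
      qed
      ultimately have "E = {0} \<or> E = UNIV" using assms(2) unfolding irreducible_mat_group_def by blast
      moreover have "v \<in> E" using lam E_def by simp
      ultimately have Eu: "E = UNIV" using v(1) by auto
      hence zall: "\<forall>x. z *v x = l *s x" unfolding E_def by auto
      have "l \<noteq> 1"
      proof
        assume "l = 1"
        hence "z = mat 1" using zall by (simp add: matrix_eq)
        thus False using assms(4) by simp
      qed
      have r1v: "r1 *v v = l *s v"
        using lam v(2) zdef by (metis matrix_vector_mul_assoc)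
      have vnot: "v \<notin> vec.span {u}"
      proof
        assume "v \<in> vec.span {u}"
        then obtain c where c: "v = c *s u" by (auto simp: vec.span_singleton)
        have "r1 *v v = v" using c u(2) by (simp add: vector_scalar_commute)
        hence "l *s v = v" using r1v by simp
        thus False using scal_eq_one[OF v(1)] \<open>l \<noteq> 1\<close> by blast
      qed
      have eq1: "mpow r1 n = mat 1 \<longleftrightarrow> l ^ n = 1" for n
      proof
        assume "mpow r1 n = mat 1"
        hence "l ^ n *s v = v" using mpow_eig[OF r1v, of n] by simp
        thus "l ^ n = 1" using scal_eq_one[OF v(1)] by blast
      next
        assume "l ^ n = 1"
        show "mpow r1 n = mat 1"
          apply (rule two_eq[OF u(1) vnot])
          using mpow_eig[OF r1v, of n] mpow_eig[of r1 u 1 n] u(2) \<open>l ^ n = 1\<close> by auto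
      qed
      have eq2: "mpow z n = mat 1 \<longleftrightarrow> l ^ n = 1" for n
      proof
        assume "mpow z n = mat 1"
        hence "l ^ n *s v = v" using mpow_eig[OF lam, of n] by simp
        thus "l ^ n = 1" using scal_eq_one[OF v(1)] by blast
      next
        assume "l ^ n = 1"
        have "\<forall>x. mpow z n *v x = mat 1 *v x"
        proof
          fix x
          have "mpow z n *v x = l ^ n *s x" using mpow_eig zall by blast
          thus "mpow z n *v x = mat 1 *v x" using \<open>l ^ n = 1\<close> by simp
        qed
        thus "mpow z n = mat 1" by (simp add: matrix_eq)
      qed
      have "mat_order r1 = mat_order z" unfolding mat_order_def using eq1 eq2 by simp
      thus False using assms(6) r1 by blast
    qed
  qed
  have "?P (refl_length G z)" unfolding refl_length_def by (rule LeastI[of ?P, OF ex])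
  hence "refl_length G z > 2"
  proof (rule contrapos_pp)
    assume "\<not> refl_length G z > 2"
    thus "\<not> ?P (refl_length G z)" by (intro no) simp
  qed
  moreover have "codim z \<le> 2" unfolding codim_def by simp
  ultimately show ?thesis by simp
qed

end
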